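(* Let $\mathcal{U}$ be a set of optimization problems equipped with a binary relation $\subseteq_{\mathcal{S}}$ ("is a subproblem of") that is transitive: for all $\mathcal{P}_1,\mathcal{P}_2,\mathcal{P}_3\in\mathcal{U}$, if $\mathcal{P}_1\subseteq_{\mathcal{S}}\mathcal{P}_2$ and $\mathcal{P}_2\subseteq_{\mathcal{S}}\mathcal{P}_3$ then $\mathcal{P}_1\subseteq_{\mathcal{S}}\mathcal{P}_3$. Let $\mathbb{T}$ be a finite rooted tree whose nodes are labelled by problems in $\mathcal{U}$, whose root $\mathcal{R}$ satisfies $\mathcal{R}\subseteq_{\mathcal{S}}\mathcal{P}$ for every $\mathcal{P}\in\mathcal{U}$, and which is subproblem order-preserving, i.e. whenever node $\mathcal{P}_i$ is an ancestor of node $\mathcal{P}_j$, we have $\mathcal{P}_i\subseteq_{\mathcal{S}}\mathcal{P}_j$. Let $\mathcal{P}\in\mathcal{U}$ be a new problem, and let $\mathcal{P}^{(M)}$ be the node obtained by the following search: start at the current node $\mathcal{N}=\mathcal{R}$; while some child $\mathcal{Q}$ of $\mathcal{N}$ satisfies $\mathcal{Q}\subseteq_{\mathcal{S}}\mathcal{P}$, move $\mathcal{N}$ to one such child; when no child of $\mathcal{N}$ satisfies this, set $\mathcal{P}^{(M)}=\mathcal{N}$. Form the tree $\mathbb{T}'$ by inserting $\mathcal{P}$ as a new child of $\mathcal{P}^{(M)}$, and, for each child $\mathcal{P}^{(M)}_k$ of $\mathcal{P}^{(M)}$ in $\mathbb{T}$: if $\mathcal{P}\subseteq_{\mathcal{S}}\mathcal{P}^{(M)}_k$,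 re-attach $\mathcal{P}^{(M)}_k$ (with its subtree) as a child of $\mathcal{P}$; otherwise leave $\mathcal{P}^{(M)}_k$ as a child of $\mathcal{P}^{(M)}$ (a sibling of $\mathcal{P}$). Then $\mathbb{T}'$ is again subproblem order-preserving. Consequently, any sequence of such insertions starting from the tree consisting only of the root preserves the subproblem order-preserving property.
   Context: In the paper, problems are operations-research optimization problems and $\tilde{\mathcal{P}}\subseteq_{\mathcal{S}}\mathcal{P}$ means $\tilde{\mathcal{P}}$ is a subproblem of $\mathcal{P}$ (its optimization model is obtained from that of $\mathcal{P}$ by keeping a subset of the variables, the part of the objective depending only on them, and some of the constraints restricted to them); the paper asserts this relation is transitive. The root of the "modeling tree" is an abstract problem class of which every problem is regarded as a subproblem-extension. A modeling tree is called subproblem order-preserving if every ancestor node's problem is a subproblem of every descendant node's problem. The update procedure is the tree search followed by node insertion described in the claim. *)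

theory Defs
  imports Main
begin

datatype 'p rtree = Node 'p "'p rtree list"

fun label :: "'p rtree \<Rightarrow> 'p" where
  "label (Node p ts) = p"

fun children :: "'p rtree \<Rightarrow> 'p rtree list" where
  "children (Node p ts) = ts"

fun labels :: "'p rtree \<Rightarrow> 'p set" where
  "labels (Node p ts) = insert p (\<Union>t\<in>set ts. labels t)"

text \<open>Subproblem order-preserving: every ancestor is a subproblem of every
  (proper) descendant.\<close>
fun order_preserving :: "('p \<Rightarrow> 'p \<Rightarrow> bool) \<Rightarrow> 'p rtree \<Rightarrow> bool" where
  "order_preserving sub (Node p ts) =
     ((\<forall>t\<in>set ts. \<forall>q\<in>labels t. sub p q) \<and> (\<forall>t\<in>set ts. order_preserving sub t))"

text \<open>The update procedure: search (nondeterministically descend into some child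
  Q with sub Q P while possible), then insert P at the reached node P^(M),
  moving the children Q' of P^(M) with sub P Q' (with their subtrees) below P.
  update sub P T T' means T' is a possible result of updating T by P.\<close>
inductive update :: "('p \<Rightarrow> 'p \<Rightarrow> bool) \<Rightarrow> 'p \<Rightarrow> 'p rtree \<Rightarrow> 'p rtree \<Rightarrow> bool"
  for sub :: "'p \<Rightarrow> 'p \<Rightarrow> bool" and P :: 'p where
  insert_here:
    "(\<forall>t\<in>set ts. \<not> sub (label t) P) \<Longrightarrow>
     update sub P (Node r ts)
       (Node r (filter (\<lambda>t. \<not> sub P (label t)) ts @
                [Node P (filter (\<lambda>t. sub P (label t)) ts)]))"
| descend:
    "i < length ts \<Longrightarrow> sub (label (ts ! i)) P \<Longrightarrow> update sub P (ts ! i) t' \<Longrightarrow>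
     update sub P (Node r ts) (Node r (ts[i := t']))"

inductive reachable :: "('p \<Rightarrow> 'p \<Rightarrow> bool) \<Rightarrow> 'p set \<Rightarrow> 'p \<Rightarrow> 'p rtree \<Rightarrow> bool"
  for sub :: "'p \<Rightarrow> 'p \<Rightarrow> bool" and U :: "'p set" and R :: 'p where
  root_only: "reachable sub U R (Node R [])"
| step: "reachable sub U R T \<Longrightarrow> P \<in> U \<Longrightarrow> update sub P T T' \<Longrightarrow> reachable sub U R T'"

end

theory Submission
  imports Defs
begin

lemma upd_label: "update sub P T T' \<Longrightarrow> label T' = label T"
  by (induction rule: update.induct) auto

lemma upd_labels: "update sub P T T' \<Longrightarrow> labels T' = insert P (labels T)"
proof (induction rule: update.induct)
  case (insert_here ts r)
  then show ?case by auto
next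
  case (descend i ts t' r)
  have "(\<Union>t\<in>set (ts[i := t']). labels t) = insert P (\<Union>t\<in>set ts. labels t)"
  proof -
    have "set (ts[i := t']) = insert t' (set (take i ts) \<union> set (drop (Suc i) ts))"
      using descend.hyps(1) by (simp add: set_update_distinct upd_conv_take_nth_drop)
    moreover have "set ts = insert (ts ! i) (set (take i ts) \<union> set (drop (Suc i) ts))"
      using descend.hyps(1) by (metis Cons_nth_drop_Suc Un_insert_right append_take_drop_id set_append set_simps(2))
    ultimately show ?thesis using descend.IH by auto
  qed
  then show ?case by auto
qed

lemma label_in_labels: "label t \<in> labels t"
  by (cases t) auto

lemma upd_op:
  assumes trans: "\<And>P1 P2 P3. P1 \<in> U \<Longrightarrow> P2 \<in> U \<Longrightarrow> P3 \<in> U \<Longrightarrow>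
                     sub P1 P2 \<Longrightarrow> sub P2 P3 \<Longrightarrow> sub P1 P3"
  shows "update sub P T T' \<Longrightarrow> P \<in> U \<Longrightarrow> labels T \<subseteq> U \<Longrightarrow> order_preserving sub T
    \<Longrightarrow> sub (label T) P \<Longrightarrow> order_preserving sub T'"
proof (induction rule: update.induct)
  case (insert_here ts r)
  have A: "order_preserving sub (Node P (filter (\<lambda>t. sub P (label t)) ts))"
  proof -
    have "sub P q" if t: "t \<in> set ts" "sub P (label t)" "q \<in> labels t" for t q
    proof (cases t)
      case (Node a cs)
      show ?thesis
      proof (cases "q = a")
        case True then show ?thesis using t Node by simp
      next
        case False
        then obtain c where c: "c \<in> set cs" "q \<in> labels c" using t Node by auto
        have "sub a q" using insert_here.prems(3) t(1) Node c by auto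
        moreover have "labels t \<subseteq> U" using insert_here.prems(2) t(1) by auto
        then have "a \<in> U" "q \<in> U" using Node t(3) by auto
        ultimately show ?thesis using trans[of P a q] insert_here.prems(1) t Node by simp
      qed
    qed
    then show ?thesis using insert_here.prems(3) by auto
  qed
  show ?case using A insert_here.prems by auto
next
  case (descend i ts t' r)
  have ti: "ts ! i \<in> set ts" using descend.hyps(1) by simp
  have opt': "order_preserving sub t'"
  proof (rule descend.IH)
    show "P \<in> U" using descend.prems(1) .
    show "labels (ts ! i) \<subseteq> U" using descend.prems(2) ti by auto
    show "order_preserving sub (ts ! i)" using descend.prems(3) ti by auto
    show "sub (label (ts ! i)) P" using descend.hyps(2) .
  qed
  have lt': "labels t' = insert P (labels (ts ! i))" using descend.hyps(3) by (rule upd_labels)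
  have rl: "sub r (label (ts ! i))" using descend.prems(3) ti
    by (cases "ts ! i") auto
  have "labels (ts ! i) \<subseteq> U" using descend.prems(2) ti by auto
  then have "label (ts ! i) \<in> U" using label_in_labels by blast
  then have rP: "sub r P" using trans[of r "label (ts ! i)" P] rl descend.hyps(2) descend.prems by auto
  have "\<forall>q\<in>labels t'. sub r q" using lt' rP descend.prems(3) ti by auto
  moreover have "set (ts[i := t']) \<subseteq> insert t' (set ts)" by (rule set_update_subset_insert)
  ultimately show ?case using descend.prems(3) opt' by auto
qed

theorem proposition1:
  fixes sub :: "'p \<Rightarrow> 'p \<Rightarrow> bool" and U :: "'p set" and R :: 'p
  assumes trans: "\<And>P1 P2 P3. P1 \<in> U \<Longrightarrow> P2 \<in> U \<Longrightarrow> P3 \<in> U \<Longrightarrow>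
                     sub P1 P2 \<Longrightarrow> sub P2 P3 \<Longrightarrow> sub P1 P3"
    and R_in: "R \<in> U"
    and root: "\<And>Q. Q \<in> U \<Longrightarrow> sub R Q"
  shows "(\<forall>T P T'. label T = R \<and> labels T \<subseteq> U \<and> order_preserving sub T \<and> P \<in> U
            \<and> update sub P T T' \<longrightarrow> order_preserving sub T')
       \<and> (\<forall>T. reachable sub U R T \<longrightarrow> order_preserving sub T)"
proof -
  have A: "\<forall>T P T'. label T = R \<and> labels T \<subseteq> U \<and> order_preserving sub T \<and> P \<in> U
            \<and> update sub P T T' \<longrightarrow> order_preserving sub T'"
  proof (intro allI impI)
    fix T P T' assume h: "label T = R \<and> labels T \<subseteq> U \<and> order_preserving sub T \<and> P \<in> U \<and> update sub P T T'"
    then have s: "sub (label T) P" using root by simp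
    show "order_preserving sub T'"
      using upd_op[of U sub P T T', OF trans] h s by simp
  qed
  have "reachable sub U R T \<Longrightarrow> label T = R \<and> labels T \<subseteq> U \<and> order_preserving sub T" for T
  proof (induction rule: reachable.induct)
    case root_only
    then show ?case using R_in by simp
  next
    case (step T P T')
    have "order_preserving sub T'" using A step by blast
    moreover have "label T' = R" using upd_label[OF step.hyps(3)] step.IH by simp
    moreover have "labels T' \<subseteq> U" using upd_labels[OF step.hyps(3)] step.IH step.hyps(2) by simp
    ultimately show ?case by simp
  qed
  then show ?thesis using A by blast
qed

end
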